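(* Let $\sigma$ have substitution matrix $M_\sigma=\begin{pmatrix}A&C\\0&B\end{pmatrix}$ with $A,B$ primitive, $C\neq0$ and $\rho(A)>\rho(B)>1$, and let $\Omega$ be the tiling space of the tile substitution $\mathcal G$ associated with $\sigma$. Put $\alpha=\log\rho(B)/\log\rho(A)$. Then there exists $K>0$ such that for every $\mathcal T\in\Omega$ and every $t>0$, $$N_{\mathcal T}(\mathcal B,t)\le K\,t^\alpha .$$
   Context: $\mathcal A=\{1,\dots,N\}$, $\sigma:\mathcal A\to\mathcal A^+$ a substitution; $M_\sigma$ has $(a,b)$ entry equal to the number of occurrences of $a$ in $\sigma(b)$; $\mathcal B$ is the set of letters indexing the block $B$. Let $\xi_1,\dots,\xi_N>0$ satisfy $|\sigma^k(i)|/(\xi_i\rho(A)^k)\to1$ as $k\to\infty$ (they form a left eigenvector of $M_\sigma$ for $\lambda:=\rho(A)$). Associated tile substitution: for $a\in\mathcal A$, the prototile $I_a$ is the interval of length $\xi_a$ centered at $0$, labeled $a$; for $v\in\mathcal A$ with $\sigma(v)=w_1\cdots w_m$, $\mathcal G(I_v)$ is the patch of consecutive translates of $I_{w_1},\dots,I_{w_m}$ (left to right) exactly subdividing $\lambda I_v$; $\mathcal G(I+u)=\mathcal G(I)+\lambda u$. The tiling space $\Omega$ is the set of tilings of $\mathbb R$ by translates of the $I_a$ all of whose finite subpatches are subpatches of some $\mathcal G^n(I_a)+u$. For $\mathcal T\in\Omega$ and $t>0$, $N_{\mathcal T}(\mathcal B,t)$ is the number of tiles of $\mathcal T$ that are translates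 of some $I_b$, $b\in\mathcal B$, and are contained in $[0,t]$. *)

theory Defs
  imports "Jordan_Normal_Form.Spectral_Radius"
begin

text \<open>Letters of the alphabet are the naturals 1..N. A substitution is a map
  sigma :: nat => nat list (nonempty words over {1..N} on the alphabet).\<close>

definition subst_word :: "(nat \<Rightarrow> nat list) \<Rightarrow> nat list \<Rightarrow> nat list" where
  "subst_word \<sigma> w = concat (map \<sigma> w)"

definition subst_iter :: "(nat \<Rightarrow> nat list) \<Rightarrow> nat \<Rightarrow> nat \<Rightarrow> nat list" where
  "subst_iter \<sigma> k a = ((subst_word \<sigma>) ^^ k) [a]"

text \<open>Block of the substitution matrix: rows indexed by letters r0+1..r0+p
  (occurring letter), columns by letters c0+1..c0+q (image letter);
  entry (a,b) = number of occurrences of a in sigma(b).\<close>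
definition subst_block :: "(nat \<Rightarrow> nat list) \<Rightarrow> nat \<Rightarrow> nat \<Rightarrow> nat \<Rightarrow> nat \<Rightarrow> nat mat" where
  "subst_block \<sigma> r0 p c0 q = mat p q (\<lambda>(i,j). count_list (\<sigma> (c0 + j + 1)) (r0 + i + 1))"

definition primitive_mat :: "nat mat \<Rightarrow> bool" where
  "primitive_mat A \<longleftrightarrow> dim_row A = dim_col A \<and>
     (\<exists>k\<ge>1. \<forall>i<dim_row A. \<forall>j<dim_col A. (A ^\<^sub>m k) $$ (i,j) > 0)"

definition rho :: "nat mat \<Rightarrow> real" where
  "rho A = spectral_radius (map_mat of_nat A)"

text \<open>A tile is a pair (a, u): the prototile I_a (interval of length xi a
  centred at 0, labelled a) translated by u.\<close>
type_synonym tile = "nat \<times> real"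

definition tile_set :: "(nat \<Rightarrow> real) \<Rightarrow> tile \<Rightarrow> real set" where
  "tile_set \<xi> t = {snd t - \<xi> (fst t) / 2 .. snd t + \<xi> (fst t) / 2}"

definition tile_interior :: "(nat \<Rightarrow> real) \<Rightarrow> tile \<Rightarrow> real set" where
  "tile_interior \<xi> t = {snd t - \<xi> (fst t) / 2 <..< snd t + \<xi> (fst t) / 2}"

definition translate_patch :: "real \<Rightarrow> tile set \<Rightarrow> tile set" where
  "translate_patch u P = (\<lambda>(a, x). (a, x + u)) ` P"

text \<open>G(I_v + u): consecutive translates of I_{w_1},...,I_{w_m} (w = sigma v),
  left to right, starting at the left endpoint of lambda (I_v + u).\<close>
definition tile_subst :: "(nat \<Rightarrow> nat list) \<Rightarrow> (nat \<Rightarrow> real) \<Rightarrow> real \<Rightarrow> tile \<Rightarrow> tile set" where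
  "tile_subst \<sigma> \<xi> lam t =
     (let v = fst t; u = snd t; w = \<sigma> v in
      {(w ! j, lam * u - lam * \<xi> v / 2 + (\<Sum>i<j. \<xi> (w ! i)) + \<xi> (w ! j) / 2) | j. j < length w})"

definition patch_subst :: "(nat \<Rightarrow> nat list) \<Rightarrow> (nat \<Rightarrow> real) \<Rightarrow> real \<Rightarrow> tile set \<Rightarrow> tile set" where
  "patch_subst \<sigma> \<xi> lam P = (\<Union>t\<in>P. tile_subst \<sigma> \<xi> lam t)"

definition is_tiling :: "nat \<Rightarrow> (nat \<Rightarrow> real) \<Rightarrow> tile set \<Rightarrow> bool" where
  "is_tiling N \<xi> T \<longleftrightarrow>
     (\<forall>t\<in>T. fst t \<in> {1..N}) \<and>
     (\<forall>x::real. \<exists>t\<in>T. x \<in> tile_set \<xi> t) \<and>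
     (\<forall>t1\<in>T. \<forall>t2\<in>T. t1 \<noteq> t2 \<longrightarrow> tile_interior \<xi> t1 \<inter> tile_interior \<xi> t2 = {})"

definition tiling_space :: "nat \<Rightarrow> (nat \<Rightarrow> nat list) \<Rightarrow> (nat \<Rightarrow> real) \<Rightarrow> real \<Rightarrow> tile set set" where
  "tiling_space N \<sigma> \<xi> lam =
     {T. is_tiling N \<xi> T \<and>
         (\<forall>P. P \<subseteq> T \<and> finite P \<longrightarrow>
            (\<exists>n a u. a \<in> {1..N} \<and> P \<subseteq> translate_patch u ((patch_subst \<sigma> \<xi> lam ^^ n) {(a, 0)})))}"

definition count_tiles :: "(nat \<Rightarrow> real) \<Rightarrow> tile set \<Rightarrow> nat set \<Rightarrow> real \<Rightarrow> nat" where
  "count_tiles \<xi> T B t = card {tl\<in>T. fst tl \<in> B \<and> tile_set \<xi> tl \<subseteq> {0..t}}"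

end

theory Submission
  imports Defs
begin


lemma subst_word_append[simp]: "subst_word \<sigma> (u @ w) = subst_word \<sigma> u @ subst_word \<sigma> w"
  by (simp add: subst_word_def)
lemma subst_word_Cons[simp]: "subst_word \<sigma> (v # w) = \<sigma> v @ subst_word \<sigma> w"
  by (simp add: subst_word_def)
lemma subst_word_Nil[simp]: "subst_word \<sigma> [] = []"
  by (simp add: subst_word_def)

lemma subst_iter_0[simp]: "subst_iter \<sigma> 0 a = [a]"
  by (simp add: subst_iter_def)

lemma funpow_sw: "(subst_word \<sigma> ^^ k) w = concat (map (subst_iter \<sigma> k) w)"
proof (induction k arbitrary: w)
  case 0
  then show ?case by (induction w) auto
next
  case (Suc k)
  have "(subst_word \<sigma> ^^ Suc k) w = subst_word \<sigma> (concat (map (subst_iter \<sigma> k) w))"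
    using Suc by simp
  also have "\<dots> = concat (map (subst_iter \<sigma> (Suc k)) w)"
    by (induction w) (auto simp: subst_iter_def)
  finally show ?case .
qed

lemma subst_iter_add: "subst_iter \<sigma> (j + k) a = concat (map (subst_iter \<sigma> k) (subst_iter \<sigma> j a))"
proof -
  have "subst_iter \<sigma> (j + k) a = (subst_word \<sigma> ^^ k) ((subst_word \<sigma> ^^ j) [a])"
    unfolding subst_iter_def
  proof -
    have "subst_word \<sigma> ^^ (j+k) = (subst_word \<sigma> ^^ k) \<circ> (subst_word \<sigma> ^^ j)"
      by (metis add.commute funpow_add)
    then show "(subst_word \<sigma> ^^ (j + k)) [a] = (subst_word \<sigma> ^^ k) ((subst_word \<sigma> ^^ j) [a])" by simp
  qed
  then show ?thesis unfolding funpow_sw[symmetric] by (simp add: subst_iter_def)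
qed

lemma subst_iter_1[simp]: "subst_iter \<sigma> (Suc 0) a = \<sigma> a"
  by (simp add: subst_iter_def subst_word_def)

lemma subst_iter_Suc: "subst_iter \<sigma> (Suc k) a = concat (map (subst_iter \<sigma> k) (\<sigma> a))"
  using subst_iter_add[of \<sigma> "Suc 0" k a] by simp

lemma subst_iter_Suc': "subst_iter \<sigma> (Suc k) a = subst_word \<sigma> (subst_iter \<sigma> k a)"
  by (simp add: subst_iter_def)

lemma subst_iter_letters:
  assumes "\<forall>a\<in>S. set (\<sigma> a) \<subseteq> S" "a \<in> S"
  shows "set (subst_iter \<sigma> k a) \<subseteq> S"
  using assms(2)
proof (induction k arbitrary: a)
  case 0 then show ?case by simp
next
  case (Suc k)
  then show ?case using assms(1) by (auto simp: subst_iter_Suc)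
qed

definition wlen :: "(nat \<Rightarrow> real) \<Rightarrow> nat list \<Rightarrow> real" where
  "wlen \<xi> w = sum_list (map \<xi> w)"

lemma wlen_simps[simp]: "wlen \<xi> [] = 0" "wlen \<xi> (v # w) = \<xi> v + wlen \<xi> w"
  "wlen \<xi> (u @ w) = wlen \<xi> u + wlen \<xi> w"
  by (auto simp: wlen_def)

lemma wlen_concat: "wlen \<xi> (concat (map f w)) = sum_list (map (\<lambda>x. wlen \<xi> (f x)) w)"
  by (induction w) auto

fun pp :: "(nat \<Rightarrow> real) \<Rightarrow> real \<Rightarrow> nat list \<Rightarrow> tile set" where
  "pp \<xi> c [] = {}"
| "pp \<xi> c (v # w) = insert (v, c + \<xi> v / 2) (pp \<xi> (c + \<xi> v) w)"

lemma pp_append: "pp \<xi> c (u @ w) = pp \<xi> c u \<union> pp \<xi> (c + wlen \<xi> u) w"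
  by (induction u arbitrary: c) (auto simp: add.assoc)

lemma pp_index: "pp \<xi> c w = {(w ! j, c + (\<Sum>i<j. \<xi> (w ! i)) + \<xi> (w ! j) / 2) | j. j < length w}"
proof (induction w arbitrary: c)
  case Nil then show ?case by simp
next
  case (Cons v w)
  have "{((v # w) ! j, c + (\<Sum>i<j. \<xi> ((v # w) ! i)) + \<xi> ((v # w) ! j) / 2) | j. j < length (v # w)}
     = insert (v, c + \<xi> v / 2) {(w ! j, c + \<xi> v + (\<Sum>i<j. \<xi> (w ! i)) + \<xi> (w ! j) / 2) | j. j < length w}"
    (is "?L = ?R")
  proof
    show "?L \<subseteq> ?R"
    proof
      fix x assume "x \<in> ?L"
      then obtain j where j: "j < length (v # w)" "x = ((v # w) ! j, c + (\<Sum>i<j. \<xi> ((v # w) ! i)) + \<xi> ((v # w) ! j) / 2)" by blast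
      show "x \<in> ?R"
      proof (cases j)
        case 0 then show ?thesis using j by simp
      next
        case (Suc j')
        then have "(\<Sum>i<j. \<xi> ((v # w) ! i)) = \<xi> v + (\<Sum>i<j'. \<xi> (w ! i))"
          by (simp del: sum.lessThan_Suc add: sum.lessThan_Suc_shift)
        then show ?thesis using j Suc by (auto simp: algebra_simps)
      qed
    qed
  next
    show "?R \<subseteq> ?L"
    proof
      fix x assume "x \<in> ?R"
      then consider "x = (v, c + \<xi> v / 2)" | j where "j < length w" "x = (w ! j, c + \<xi> v + (\<Sum>i<j. \<xi> (w ! i)) + \<xi> (w ! j) / 2)" by blast
      then show "x \<in> ?L"
      proof cases
        case 1 then show ?thesis by (auto intro!: exI[of _ 0])
      next
        case 2
        have "(\<Sum>i<Suc j. \<xi> ((v # w) ! i)) = \<xi> v + (\<Sum>i<j. \<xi> (w ! i))"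
          by (simp del: sum.lessThan_Suc add: sum.lessThan_Suc_shift)
        then show ?thesis using 2 by (auto intro!: exI[of _ "Suc j"] simp: algebra_simps)
      qed
    qed
  qed
  then show ?case using Cons[of "c + \<xi> v"] by (simp add: algebra_simps)
qed

lemma tile_subst_pp: "tile_subst \<sigma> \<xi> lam (v, x) = pp \<xi> (lam * x - lam * \<xi> v / 2) (\<sigma> v)"
  by (simp add: tile_subst_def pp_index Let_def)

lemma patch_subst_insert: "patch_subst \<sigma> \<xi> lam (insert t P) = tile_subst \<sigma> \<xi> lam t \<union> patch_subst \<sigma> \<xi> lam P"
  by (simp add: patch_subst_def)

lemma patch_subst_pp:
  assumes "\<forall>v\<in>set w. wlen \<xi> (\<sigma> v) = lam * \<xi> v"
  shows "patch_subst \<sigma> \<xi> lam (pp \<xi> c w) = pp \<xi> (lam * c) (subst_word \<sigma> w)"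
  using assms
proof (induction w arbitrary: c)
  case Nil then show ?case by (simp add: patch_subst_def)
next
  case (Cons v w)
  have "patch_subst \<sigma> \<xi> lam (pp \<xi> c (v # w)) = pp \<xi> (lam * c) (\<sigma> v) \<union> pp \<xi> (lam * (c + \<xi> v)) (subst_word \<sigma> w)"
    using Cons by (simp add: patch_subst_insert tile_subst_pp algebra_simps)
  also have "\<dots> = pp \<xi> (lam * c) (subst_word \<sigma> (v # w))"
    using Cons.prems by (simp add: pp_append algebra_simps)
  finally show ?case .
qed

lemma patch_iter_pp:
  assumes "\<forall>v\<in>S. wlen \<xi> (\<sigma> v) = lam * \<xi> v" "\<forall>a\<in>S. set (\<sigma> a) \<subseteq> S" "a \<in> S"
  shows "(patch_subst \<sigma> \<xi> lam ^^ n) {(a, 0)} = pp \<xi> (- (lam ^ n * \<xi> a / 2)) (subst_iter \<sigma> n a)"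
proof (induction n)
  case 0 then show ?case by simp
next
  case (Suc n)
  have "\<forall>v\<in>set (subst_iter \<sigma> n a). wlen \<xi> (\<sigma> v) = lam * \<xi> v"
    using subst_iter_letters[OF assms(2,3)] assms(1) by blast
  then show ?case using Suc by (simp add: patch_subst_pp subst_iter_Suc' mult.assoc)
qed


lemma finite_pp[simp]: "finite (pp \<xi> c w)"
  by (induction w arbitrary: c) auto

definition cnt :: "(nat \<Rightarrow> real) \<Rightarrow> nat set \<Rightarrow> real \<Rightarrow> nat list \<Rightarrow> real \<Rightarrow> real \<Rightarrow> nat" where
  "cnt \<xi> S c w lo hi = card {tt \<in> pp \<xi> c w. fst tt \<in> S \<and> tile_set \<xi> tt \<subseteq> {lo..hi}}"

definition bcount :: "nat set \<Rightarrow> nat list \<Rightarrow> nat" where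
  "bcount S w = length (filter (\<lambda>x. x \<in> S) w)"

lemma card_insert_filter_le:
  assumes "finite P"
  shows "card {x \<in> insert t P. Q x} \<le> (if Q t then 1 else 0) + card {x \<in> P. Q x}"
proof -
  have "{x \<in> insert t P. Q x} \<subseteq> (if Q t then {t} else {}) \<union> {x \<in> P. Q x}" by auto
  then have "card {x \<in> insert t P. Q x} \<le> card ((if Q t then {t} else {}) \<union> {x \<in> P. Q x})"
    by (intro card_mono) (use assms in auto)
  also have "\<dots> \<le> card (if Q t then {t} else {}) + card {x \<in> P. Q x}" by (rule card_Un_le)
  finally show ?thesis by (auto split: if_splits)
qed

lemma cnt_le_bcount: "cnt \<xi> S c w lo hi \<le> bcount S w"
proof (induction w arbitrary: c)
  case Nil then show ?case by (simp add: cnt_def bcount_def)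
next
  case (Cons v w)
  have "cnt \<xi> S c (v # w) lo hi \<le> (if v \<in> S \<and> tile_set \<xi> (v, c + \<xi> v / 2) \<subseteq> {lo..hi} then 1 else 0)
        + cnt \<xi> S (c + \<xi> v) w lo hi"
    unfolding cnt_def pp.simps
    by (rule order.trans[OF card_insert_filter_le[OF finite_pp, where t="(v, c + \<xi> v / 2)" and Q="\<lambda>tt. fst tt \<in> S \<and> tile_set \<xi> tt \<subseteq> {lo..hi}"]]) simp
  also have "\<dots> \<le> bcount S (v # w)" using Cons[of "c + \<xi> v"] by (auto simp: bcount_def)
  finally show ?case .
qed

lemma Collect_mem_Un: "{x \<in> A \<union> B. P x} = {x \<in> A. P x} \<union> {x \<in> B. P x}"
  by blast

lemma cnt_append: "cnt \<xi> S c (u @ w) lo hi \<le> cnt \<xi> S c u lo hi + cnt \<xi> S (c + wlen \<xi> u) w lo hi"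
  unfolding cnt_def pp_append Collect_mem_Un by (rule card_Un_le)

lemma pp_tile_set:
  assumes "\<forall>v\<in>set w. \<xi> v \<ge> 0" "tt \<in> pp \<xi> c w"
  shows "tile_set \<xi> tt \<subseteq> {c .. c + wlen \<xi> w}"
  using assms
proof (induction w arbitrary: c)
  case Nil then show ?case by simp
next
  case (Cons v w)
  have "0 \<le> wlen \<xi> w" using Cons.prems(1) unfolding wlen_def by (intro sum_list_nonneg) auto
  show ?case
  proof (cases "tt = (v, c + \<xi> v / 2)")
    case True
    then show ?thesis using \<open>0 \<le> wlen \<xi> w\<close> by (auto simp: tile_set_def)
  next
    case False
    then have "tt \<in> pp \<xi> (c + \<xi> v) w" using Cons.prems(2) by simp
    then have "tile_set \<xi> tt \<subseteq> {c + \<xi> v .. c + \<xi> v + wlen \<xi> w}" using Cons by auto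
    then show ?thesis using Cons.prems(1) by auto
  qed
qed

lemma pp_fst: "tt \<in> pp \<xi> c w \<Longrightarrow> fst tt \<in> set w"
  by (induction w arbitrary: c) auto

lemma cnt_zero:
  assumes "\<forall>v\<in>set w. \<xi> v \<ge> 0" "hi < c \<or> c + wlen \<xi> w < lo"
  shows "cnt \<xi> S c w lo hi = 0"
proof -
  have "{tt \<in> pp \<xi> c w. fst tt \<in> S \<and> tile_set \<xi> tt \<subseteq> {lo..hi}} = {}"
  proof (rule ccontr)
    assume "\<not> ?thesis"
    then obtain tt where tt: "tt \<in> pp \<xi> c w" "tile_set \<xi> tt \<subseteq> {lo..hi}" by auto
    have "\<xi> (fst tt) \<ge> 0" using assms(1) pp_fst[OF tt(1)] by auto
    then have "snd tt \<in> tile_set \<xi> tt" by (auto simp: tile_set_def)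
    then show False using tt pp_tile_set[OF assms(1) tt(1)] assms(2) by fastforce
  qed
  then show ?thesis by (simp add: cnt_def)
qed

lemma wlen_nonneg: "\<forall>v\<in>set w. \<xi> v \<ge> 0 \<Longrightarrow> wlen \<xi> w \<ge> 0"
  unfolding wlen_def by (intro sum_list_nonneg) auto

definition phi :: "real \<Rightarrow> real \<Rightarrow> real \<Rightarrow> real \<Rightarrow> real" where
  "phi D lo hi c = (if hi < c then 0 else if lo \<le> c then (hi - c) / D + 1 else (hi - lo) / D + 2)"

lemma phi_le: assumes "D > 0" "lo \<le> hi" shows "phi D lo hi c \<le> (hi - lo) / D + 2"
proof -
  have "lo \<le> c \<Longrightarrow> (hi - c) / D \<le> (hi - lo) / D" using assms by (simp add: divide_right_mono)
  moreover have "0 \<le> (hi - lo) / D" using assms by simp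
  ultimately show ?thesis unfolding phi_def by auto
qed

lemma phi_nonneg: assumes "D > 0" "lo \<le> hi" shows "phi D lo hi c \<ge> 0"
proof -
  have "c \<le> hi \<Longrightarrow> 0 \<le> (hi - c) / D" using assms by simp
  moreover have "0 \<le> (hi - lo) / D" using assms by simp
  ultimately show ?thesis unfolding phi_def by auto
qed

lemma window_bound:
  fixes f :: "nat \<Rightarrow> nat list"
  assumes D: "D > 0" and lohi: "lo \<le> hi" and S0: "Sm \<ge> 0"
    and pieces: "\<forall>v\<in>set ws. wlen \<xi> (f v) \<ge> D \<and> real (bcount S (f v)) \<le> Sm \<and> (\<forall>x\<in>set (f v). \<xi> x \<ge> 0)"
  shows "real (cnt \<xi> S c (concat (map f ws)) lo hi) \<le> Sm * phi D lo hi c"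
  using pieces
proof (induction ws arbitrary: c)
  case Nil then show ?case using S0 phi_nonneg[OF D lohi] by (simp add: cnt_def)
next
  case (Cons v ws)
  let ?l = "wlen \<xi> (f v)"
  have pv: "?l \<ge> D" "real (bcount S (f v)) \<le> Sm" "\<forall>x\<in>set (f v). \<xi> x \<ge> 0" using Cons.prems by auto
  have IH: "real (cnt \<xi> S (c + ?l) (concat (map f ws)) lo hi) \<le> Sm * phi D lo hi (c + ?l)"
    using Cons by auto
  have split: "real (cnt \<xi> S c (concat (map f (v # ws))) lo hi) \<le> real (cnt \<xi> S c (f v) lo hi) + real (cnt \<xi> S (c + ?l) (concat (map f ws)) lo hi)"
    using cnt_append[of \<xi> S c "f v" "concat (map f ws)" lo hi] by simp
  have first_le: "real (cnt \<xi> S c (f v) lo hi) \<le> Sm" using cnt_le_bcount[of \<xi> S c "f v" lo hi] pv(2) by linarith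
  have first_zero: "hi < c \<or> c + ?l < lo \<Longrightarrow> cnt \<xi> S c (f v) lo hi = 0" using cnt_zero pv(3) by blast
  have key: "(if hi < c \<or> c + ?l < lo then 0 else 1) + phi D lo hi (c + ?l) \<le> phi D lo hi c"
  proof -
    have a: "(hi - c - ?l) / D \<le> (hi - c) / D - 1" using D pv(1) by (simp add: field_simps)
    have b: "(hi - (c + ?l)) / D \<le> (hi - lo) / D" if "c + ?l \<ge> lo" using D that by (simp add: divide_right_mono)
    have c1: "0 \<le> (hi - c) / D" if "c \<le> hi" using D that by simp
    show ?thesis unfolding phi_def using a b c1 lohi D pv(1)
      by (auto simp: algebra_simps)
  qed
  have "real (cnt \<xi> S c (f v) lo hi) \<le> Sm * (if hi < c \<or> c + ?l < lo then 0 else 1)"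
    using first_le first_zero by auto
  then have "real (cnt \<xi> S c (concat (map f (v # ws))) lo hi) \<le> Sm * ((if hi < c \<or> c + ?l < lo then 0 else 1) + phi D lo hi (c + ?l))"
    using split IH by (simp add: distrib_left)
  also have "\<dots> \<le> Sm * phi D lo hi c" using key S0 by (intro mult_left_mono) auto
  finally show ?case .
qed


lemma sum_list_count:
  assumes "set xs \<subseteq> X" "finite X"
  shows "sum_list (map f xs) = (\<Sum>x\<in>X. of_nat (count_list xs x) * (f x :: 'b::comm_semiring_1))"
  using assms(1)
proof (induction xs)
  case Nil then show ?case by simp
next
  case (Cons a xs)
  have "(\<Sum>x\<in>X. of_nat (count_list (a # xs) x) * f x) = (\<Sum>x\<in>X. (if a = x then f x else 0) + of_nat (count_list xs x) * (f x :: 'b))"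
    by (intro sum.cong) (auto simp: distrib_right)
  also have "\<dots> = (\<Sum>x\<in>X. (if a = x then f x else 0)) + (\<Sum>x\<in>X. of_nat (count_list xs x) * (f x :: 'b))"
    by (rule sum.distrib)
  also have "(\<Sum>x\<in>X. (if a = x then f x else 0)) = f a" using Cons.prems assms(2) by (simp add: sum.delta)
  finally show ?case using Cons by simp
qed

locale tsetup =
  fixes N m :: nat and \<sigma> :: "nat \<Rightarrow> nat list" and \<xi> :: "nat \<Rightarrow> real" and lam :: real
  assumes m_lt: "m < N"
  and subst: "\<forall>a\<in>{1..N}. \<sigma> a \<noteq> [] \<and> set (\<sigma> a) \<subseteq> {1..N}"
  and lower_zero: "\<forall>a\<in>{m+1..N}. \<forall>b\<in>{1..m}. count_list (\<sigma> b) a = 0"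
  and xi_pos: "\<forall>i\<in>{1..N}. \<xi> i > 0"
  and lam_gt1: "lam > 1"
  and xi_lim: "\<forall>i\<in>{1..N}. (\<lambda>k. real (length (subst_iter \<sigma> k i)) / (\<xi> i * lam ^ k)) \<longlonglongrightarrow> 1"
begin

lemma subst_set: "\<forall>a\<in>{1..N}. set (\<sigma> a) \<subseteq> {1..N}" using subst by blast

lemma letters: "a \<in> {1..N} \<Longrightarrow> set (subst_iter \<sigma> k a) \<subseteq> {1..N}"
  using subst_iter_letters[OF subst_set] by blast

lemma A_closed1: "\<forall>b\<in>{1..m}. set (\<sigma> b) \<subseteq> {1..m}"
proof (intro ballI subsetI)
  fix b x assume b: "b \<in> {1..m}" and x: "x \<in> set (\<sigma> b)"
  have "b \<in> {1..N}" using b m_lt by auto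
  then have "x \<in> {1..N}" using subst_set x by blast
  show "x \<in> {1..m}"
  proof (rule ccontr)
    assume "x \<notin> {1..m}"
    then have "x \<in> {m+1..N}" using \<open>x \<in> {1..N}\<close> by auto
    then have "count_list (\<sigma> b) x = 0" using lower_zero b by blast
    then show False using x by (simp add: count_list_0_iff)
  qed
qed

lemma A_closed: "a \<in> {1..m} \<Longrightarrow> set (subst_iter \<sigma> k a) \<subseteq> {1..m}"
  using subst_iter_letters[OF A_closed1] by blast

lemma length_iter_Suc: "length (subst_iter \<sigma> (Suc k) v) = sum_list (map (\<lambda>x. length (subst_iter \<sigma> k x)) (\<sigma> v))"
  by (simp add: subst_iter_Suc length_concat o_def)

lemma lim_a:
  assumes "x \<in> {1..N}"
  shows "(\<lambda>k. real (length (subst_iter \<sigma> k x)) / lam ^ k) \<longlonglongrightarrow> \<xi> x"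
proof -
  have xp: "\<xi> x > 0" using xi_pos assms by auto
  have "(\<lambda>k. \<xi> x * (real (length (subst_iter \<sigma> k x)) / (\<xi> x * lam ^ k))) \<longlonglongrightarrow> \<xi> x * 1"
    using xi_lim assms by (intro tendsto_mult_left) auto
  moreover have "\<And>k. \<xi> x * (real (length (subst_iter \<sigma> k x)) / (\<xi> x * lam ^ k)) = real (length (subst_iter \<sigma> k x)) / lam ^ k"
    using xp by simp
  ultimately show ?thesis by simp
qed

lemma eigen:
  assumes v: "v \<in> {1..N}"
  shows "wlen \<xi> (\<sigma> v) = lam * \<xi> v"
proof -
  let ?a = "\<lambda>k x. real (length (subst_iter \<sigma> k x)) / lam ^ k"
  have sv: "set (\<sigma> v) \<subseteq> {1..N}" using subst_set v by blast
  have eq: "?a (Suc k) v = (1 / lam) * (\<Sum>x\<in>set (\<sigma> v). real (count_list (\<sigma> v) x) * ?a k x)" for k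
  proof -
    have "real (length (subst_iter \<sigma> (Suc k) v)) = (\<Sum>x\<in>set (\<sigma> v). real (count_list (\<sigma> v) x) * real (length (subst_iter \<sigma> k x)))"
      unfolding length_iter_Suc sum_list_map_eq_sum_count by simp
    then show ?thesis using lam_gt1 by (simp add: sum_divide_distrib sum_distrib_left field_simps)
  qed
  have "(\<lambda>k. (1 / lam) * (\<Sum>x\<in>set (\<sigma> v). real (count_list (\<sigma> v) x) * ?a k x))
        \<longlonglongrightarrow> (1 / lam) * (\<Sum>x\<in>set (\<sigma> v). real (count_list (\<sigma> v) x) * \<xi> x)"
    using sv by (intro tendsto_mult_left tendsto_sum lim_a) auto
  then have l1: "(\<lambda>k. ?a (Suc k) v) \<longlonglongrightarrow> (1 / lam) * (\<Sum>x\<in>set (\<sigma> v). real (count_list (\<sigma> v) x) * \<xi> x)"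
    unfolding eq .
  have l2: "(\<lambda>k. ?a (Suc k) v) \<longlonglongrightarrow> \<xi> v"
    using lim_a[OF v] by (rule LIMSEQ_Suc)
  have "\<xi> v = (1 / lam) * (\<Sum>x\<in>set (\<sigma> v). real (count_list (\<sigma> v) x) * \<xi> x)"
    using LIMSEQ_unique[OF l2 l1] .
  moreover have "wlen \<xi> (\<sigma> v) = (\<Sum>x\<in>set (\<sigma> v). real (count_list (\<sigma> v) x) * \<xi> x)"
    unfolding wlen_def by (rule sum_list_count) auto
  ultimately show ?thesis using lam_gt1 by simp
qed

lemma wlen_iter:
  assumes "v \<in> {1..N}"
  shows "wlen \<xi> (subst_iter \<sigma> k v) = lam ^ k * \<xi> v"
  using assms
proof (induction k arbitrary: v)
  case 0 then show ?case by simp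
next
  case (Suc k)
  have sv: "set (\<sigma> v) \<subseteq> {1..N}" using subst_set Suc.prems by blast
  have "wlen \<xi> (subst_iter \<sigma> (Suc k) v) = sum_list (map (\<lambda>x. wlen \<xi> (subst_iter \<sigma> k x)) (\<sigma> v))"
    by (simp add: subst_iter_Suc wlen_concat)
  also have "\<dots> = sum_list (map (\<lambda>x. lam ^ k * \<xi> x) (\<sigma> v))"
    using sv Suc.IH by (intro arg_cong[where f=sum_list] map_cong) auto
  also have "\<dots> = lam ^ k * wlen \<xi> (\<sigma> v)"
    by (simp add: wlen_def sum_list_const_mult)
  also have "\<dots> = lam ^ Suc k * \<xi> v" using eigen[OF Suc.prems] by simp
  finally show ?case .
qed

lemma patch_iter:
  assumes "a \<in> {1..N}"
  shows "(patch_subst \<sigma> \<xi> lam ^^ n) {(a, 0)} = pp \<xi> (- (lam ^ n * \<xi> a / 2)) (subst_iter \<sigma> n a)"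
  using patch_iter_pp[of "{1..N}" \<xi> \<sigma> lam a n] eigen subst_set assms by blast

end


lemma count_list_filter_mem: "x \<in> S \<Longrightarrow> count_list (filter (\<lambda>y. y \<in> S) w) x = count_list w x"
  by (induction w) auto

lemma bcount_sum: "finite S \<Longrightarrow> bcount S w = (\<Sum>i\<in>S. count_list w i)"
proof -
  assume fS: "finite S"
  have "bcount S w = (\<Sum>i\<in>S. count_list (filter (\<lambda>y. y \<in> S) w) i)"
    unfolding bcount_def by (rule sum_count_set[symmetric]) (use fS in auto)
  also have "\<dots> = (\<Sum>i\<in>S. count_list w i)" by (intro sum.cong) (auto simp: count_list_filter_mem)
  finally show ?thesis .
qed

context tsetup
begin

abbreviation "q \<equiv> N - m"
abbreviation "Bm \<equiv> subst_block \<sigma> m (N - m) m (N - m)"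

lemma Bm_carrier: "Bm \<in> carrier_mat q q"
  by (simp add: subst_block_def)

lemma Bm_dims[simp]: "dim_row Bm = q" "dim_col Bm = q"
  by (simp_all add: subst_block_def)

lemma Bm_index: "i < q \<Longrightarrow> j < q \<Longrightarrow> Bm $$ (i, j) = count_list (\<sigma> (m + j + 1)) (m + i + 1)"
  by (simp add: subst_block_def)

lemma count_iter_Suc_B:
  assumes i: "i' \<in> {m+1..N}" and j: "j' \<in> {1..N}"
  shows "count_list (subst_iter \<sigma> (Suc k) j') i' = (\<Sum>l<q. count_list (\<sigma> j') (m + l + 1) * count_list (subst_iter \<sigma> k (m + l + 1)) i')"
proof -
  have sj: "set (\<sigma> j') \<subseteq> {1..N}" using subst_set j by blast
  have "count_list (subst_iter \<sigma> (Suc k) j') i' = sum_list (map (\<lambda>x. count_list (subst_iter \<sigma> k x) i') (\<sigma> j'))"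
    by (simp add: subst_iter_Suc count_list_concat o_def)
  also have "\<dots> = (\<Sum>x\<in>{1..N}. of_nat (count_list (\<sigma> j') x) * count_list (subst_iter \<sigma> k x) i')"
    by (rule sum_list_count[OF sj]) simp
  also have "\<dots> = (\<Sum>x\<in>{1..m}. count_list (\<sigma> j') x * count_list (subst_iter \<sigma> k x) i') + (\<Sum>x\<in>{m+1..N}. count_list (\<sigma> j') x * count_list (subst_iter \<sigma> k x) i')"
  proof -
    have "{1..N} = {1..m} \<union> {m+1..N}" using m_lt by auto
    then show ?thesis by (simp add: sum.union_disjoint)
  qed
  also have "(\<Sum>x\<in>{1..m}. count_list (\<sigma> j') x * count_list (subst_iter \<sigma> k x) i') = 0"
  proof (intro sum.neutral ballI)
    fix x assume x: "x \<in> {1..m}"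
    have "set (subst_iter \<sigma> k x) \<subseteq> {1..m}" by (rule A_closed[OF x])
    then have "i' \<notin> set (subst_iter \<sigma> k x)" using i by auto
    then show "count_list (\<sigma> j') x * count_list (subst_iter \<sigma> k x) i' = 0" by (simp add: count_list_0_iff)
  qed
  also have "(\<Sum>x\<in>{m+1..N}. count_list (\<sigma> j') x * count_list (subst_iter \<sigma> k x) i')
      = (\<Sum>l<q. count_list (\<sigma> j') (m + l + 1) * count_list (subst_iter \<sigma> k (m + l + 1)) i')"
  proof -
    have "{m+1..N} = (\<lambda>l. m + l + 1) ` {..<q}"
    proof
      show "{m+1..N} \<subseteq> (\<lambda>l. m + l + 1) ` {..<q}"
      proof
        fix x assume "x \<in> {m+1..N}"
        then have "x = m + (x - m - 1) + 1" "x - m - 1 < q" by auto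
        then show "x \<in> (\<lambda>l. m + l + 1) ` {..<q}" by blast
      qed
    qed auto
    moreover have "inj_on (\<lambda>l. m + l + 1) {..<q}" by (auto simp: inj_on_def)
    ultimately show ?thesis by (simp add: sum.reindex)
  qed
  finally show ?thesis by simp
qed

lemma block_pow:
  assumes "i < q" "j < q"
  shows "(map_mat (of_nat :: nat \<Rightarrow> 'a :: semiring_1) Bm ^\<^sub>m k) $$ (i, j) = of_nat (count_list (subst_iter \<sigma> k (m + j + 1)) (m + i + 1))"
  using assms(2)
proof (induction k arbitrary: j)
  case 0
  then show ?case using assms(1) by (simp add: subst_block_def)
next
  case (Suc k)
  let ?X = "map_mat (of_nat :: nat \<Rightarrow> 'a) Bm"
  have X: "?X \<in> carrier_mat q q" using Bm_carrier by simp
  have "(?X ^\<^sub>m Suc k) $$ (i, j) = (\<Sum>l<q. (?X ^\<^sub>m k) $$ (i, l) * ?X $$ (l, j))"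
    using X assms(1) Suc.prems by (simp add: scalar_prod_def lessThan_atLeast0)
  also have "\<dots> = (\<Sum>l<q. of_nat (count_list (subst_iter \<sigma> k (m + l + 1)) (m + i + 1)) * of_nat (count_list (\<sigma> (m + j + 1)) (m + l + 1)))"
    using Suc.IH Bm_index assms(1) Suc.prems by (intro sum.cong) auto
  also have "\<dots> = of_nat (count_list (subst_iter \<sigma> (Suc k) (m + j + 1)) (m + i + 1))"
  proof -
    have "count_list (subst_iter \<sigma> (Suc k) (m + j + 1)) (m + i + 1) = (\<Sum>l<q. count_list (\<sigma> (m + j + 1)) (m + l + 1) * count_list (subst_iter \<sigma> k (m + l + 1)) (m + i + 1))"
      using assms(1) Suc.prems by (intro count_iter_Suc_B) auto
    also have "\<dots> = (\<Sum>l<q. count_list (subst_iter \<sigma> k (m + l + 1)) (m + i + 1) * count_list (\<sigma> (m + j + 1)) (m + l + 1))"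
      by (simp add: mult.commute)
    finally show ?thesis by simp
  qed
  finally show ?case .
qed

end


context tsetup
begin

lemma spec_bound:
  assumes r1: "rho Bm > 1"
  shows "\<exists>c1 c2. \<forall>k i j. i < q \<longrightarrow> j < q \<longrightarrow>
     real (count_list (subst_iter \<sigma> k (m + j + 1)) (m + i + 1)) \<le> rho Bm ^ k * (c1 + c2 * real k ^ (q - 1))"
proof -
  let ?Bc = "map_mat (of_nat :: nat \<Rightarrow> complex) Bm"
  define r where "r = rho Bm"
  have r_sr: "r = spectral_radius ?Bc" by (simp add: r_def rho_def)
  have r0: "r > 0" using r1 r_def by simp
  have q0: "q > 0" using m_lt by simp
  have Bc: "?Bc \<in> carrier_mat q q" using Bm_carrier by simp
  define c where "c = complex_of_real (1 / r)"
  have c0: "c \<noteq> 0" using r0 by (simp add: c_def)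
  define A' where "A' = c \<cdot>\<^sub>m ?Bc"
  have A': "A' \<in> carrier_mat q q" using Bc by (simp add: A'_def)
  have A'pow: "(A' ^\<^sub>m k) $$ (i, j) = c ^ k * (?Bc ^\<^sub>m k) $$ (i, j)" if "i < q" "j < q" for k i j
    using that(2)
  proof (induction k arbitrary: j)
    case 0 then show ?case using that(1) A' by simp
  next
    case (Suc k)
    have "(A' ^\<^sub>m Suc k) $$ (i, j) = (\<Sum>l<q. (A' ^\<^sub>m k) $$ (i, l) * A' $$ (l, j))"
      using A' that(1) Suc.prems by (simp add: scalar_prod_def lessThan_atLeast0)
    also have "\<dots> = (\<Sum>l<q. c ^ Suc k * ((?Bc ^\<^sub>m k) $$ (i, l) * ?Bc $$ (l, j)))"
      using Suc.IH Suc.prems that(1) by (intro sum.cong) (auto simp: A'_def)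
    also have "\<dots> = c ^ Suc k * (\<Sum>l<q. (?Bc ^\<^sub>m k) $$ (i, l) * ?Bc $$ (l, j))"
      by (simp add: sum_distrib_left)
    also have "(\<Sum>l<q. (?Bc ^\<^sub>m k) $$ (i, l) * ?Bc $$ (l, j)) = (?Bc ^\<^sub>m Suc k) $$ (i, j)"
      using Bc that(1) Suc.prems by (simp add: scalar_prod_def lessThan_atLeast0)
    finally show ?case .
  qed
  have sr: "spectral_radius A' \<le> 1"
  proof -
    obtain e where e: "e \<in> spectrum A'" "spectral_radius A' = norm e"
      using spectral_radius_mem_max(1)[OF A' q0] by auto
    from e(1) obtain v where ev: "eigenvector A' v e"
      unfolding spectrum_def eigenvalue_def by auto
    then have v: "v \<in> carrier_vec q" "v \<noteq> 0\<^sub>v q" "A' *\<^sub>v v = e \<cdot>\<^sub>v v"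
      using A' unfolding eigenvector_def by auto
    have "?Bc *\<^sub>v v = (of_real r * e) \<cdot>\<^sub>v v"
    proof (rule eq_vecI)
      fix i assume i: "i < dim_vec ((of_real r * e) \<cdot>\<^sub>v v)"
      then have iq: "i < q" using v(1) by simp
      have "e * v $ i = (A' *\<^sub>v v) $ i" using v(3) iq v(1) by simp
      also have "\<dots> = (\<Sum>l<q. A' $$ (i, l) * v $ l)"
        using iq A' v(1) by (simp add: scalar_prod_def lessThan_atLeast0)
      also have "\<dots> = c * (\<Sum>l<q. ?Bc $$ (i, l) * v $ l)"
        using iq by (simp add: A'_def sum_distrib_left mult.assoc)
      also have "(\<Sum>l<q. ?Bc $$ (i, l) * v $ l) = (?Bc *\<^sub>v v) $ i"
        using iq Bc v(1) by (simp add: scalar_prod_def lessThan_atLeast0)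
      finally have "(?Bc *\<^sub>v v) $ i = e * v $ i / c" using c0 by (simp add: field_simps)
      then show "(?Bc *\<^sub>v v) $ i = ((of_real r * e) \<cdot>\<^sub>v v) $ i"
        using iq v(1) r0 by (simp add: c_def field_simps)
    qed (use v(1) in simp)
    then have "eigenvector ?Bc v (of_real r * e)"
      using v Bc unfolding eigenvector_def by simp
    then have "of_real r * e \<in> spectrum ?Bc" unfolding spectrum_def eigenvalue_def by auto
    then have "norm (of_real r * e) \<le> r"
      using spectral_radius_mem_max(2)[OF Bc q0] r_sr by auto
    then have "r * norm e \<le> r * 1" using r0 by (simp add: norm_mult)
    then have "norm e \<le> 1" using r0 by (simp add: mult_le_cancel_left_pos)
    then show ?thesis using e(2) by simp
  qed
  obtain c1 c2 where nb: "\<And>k. norm_bound (A' ^\<^sub>m k) (c1 + c2 * of_nat k ^ (q - 1))"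
    using spectral_radius_jnf_norm_bound_le_1_upper_triangular[OF A' sr] by blast
  show ?thesis
  proof (intro exI allI impI)
    fix k i j assume i: "i < q" and j: "j < q"
    have n1: "norm ((A' ^\<^sub>m k) $$ (i, j)) \<le> c1 + c2 * of_nat k ^ (q - 1)"
      using nb[of k] A' i j unfolding norm_bound_def by auto
    have n2: "(A' ^\<^sub>m k) $$ (i, j) = c ^ k * of_nat (count_list (subst_iter \<sigma> k (m + j + 1)) (m + i + 1))"
      using A'pow[OF i j, of k] block_pow[OF i j, where 'a=complex, of k] by simp
    have "(1 / r) ^ k * real (count_list (subst_iter \<sigma> k (m + j + 1)) (m + i + 1)) \<le> c1 + c2 * real k ^ (q - 1)"
    proof -
      have "cmod (1 / complex_of_real r) = 1 / r" using r0 by (simp add: norm_divide)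
      then show ?thesis using n1 n2 r0 by (simp add: c_def norm_mult norm_power)
    qed
    then have "r ^ k * ((1 / r) ^ k * real (count_list (subst_iter \<sigma> k (m + j + 1)) (m + i + 1))) \<le> r ^ k * (c1 + c2 * real k ^ (q - 1))"
      using r0 by (intro mult_left_mono) auto
    then show "real (count_list (subst_iter \<sigma> k (m + j + 1)) (m + i + 1)) \<le> rho Bm ^ k * (c1 + c2 * real k ^ (q - 1))"
      using r0 by (simp add: r_def power_one_over field_simps)
  qed
qed

end


lemma growth_le_1:
  fixes x E :: real
  assumes x0: "x \<ge> 0" and E: "E > 0" and b: "\<And>n. n \<ge> 1 \<Longrightarrow> x ^ n \<le> E * real n ^ d"
  shows "x \<le> 1"
proof -
  have lim: "(\<lambda>n. root n E * root n (real n) ^ d) \<longlonglongrightarrow> 1 * 1 ^ d"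
    by (intro tendsto_mult tendsto_power LIMSEQ_root_const LIMSEQ_root E)
  have "\<forall>n\<ge>1. x \<le> root n E * root n (real n) ^ d"
  proof (intro allI impI)
    fix n :: nat assume n: "n \<ge> 1"
    have "x = root n (x ^ n)" using x0 n by (simp add: real_root_pos2)
    also have "\<dots> \<le> root n (E * real n ^ d)" using n b[OF n] by (intro real_root_le_mono) auto
    also have "\<dots> = root n E * root n (real n) ^ d" using n by (simp add: real_root_mult real_root_power)
    finally show "x \<le> root n E * root n (real n) ^ d" .
  qed
  then have "x \<le> 1 * 1 ^ d" by (intro LIMSEQ_le_const[OF lim]) auto
  then show ?thesis by simp
qed

lemma bcount_concat: "bcount S (concat (map f w)) = sum_list (map (\<lambda>x. bcount S (f x)) w)"
  by (induction w) (auto simp: bcount_def)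

context tsetup
begin

abbreviation "Bs \<equiv> {m+1..N}"
definition sB :: "nat \<Rightarrow> nat \<Rightarrow> nat" where "sB k v = bcount Bs (subst_iter \<sigma> k v)"

lemma sB_add: "sB (j + k) v = sum_list (map (sB k) (subst_iter \<sigma> j v))"
  unfolding sB_def subst_iter_add bcount_concat ..

lemma sB_A: "v \<in> {1..m} \<Longrightarrow> sB k v = 0"
proof -
  assume v: "v \<in> {1..m}"
  have "set (subst_iter \<sigma> k v) \<subseteq> {1..m}" by (rule A_closed[OF v])
  then have "filter (\<lambda>x. x \<in> Bs) (subst_iter \<sigma> k v) = []" by (auto simp: filter_empty_conv)
  then show ?thesis by (simp add: sB_def bcount_def)
qed

lemma sB_0: "v \<in> Bs \<Longrightarrow> sB 0 v = 1"
  by (simp add: sB_def bcount_def)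

lemma sB_poly:
  assumes r1: "rho Bm > 1"
  shows "\<exists>E>0. \<forall>n\<ge>1. \<forall>v\<in>Bs. real (sB n v) \<le> rho Bm ^ n * E * real n ^ (q - 1)"
proof -
  obtain c1 c2 where cb: "\<And>k i j. i < q \<Longrightarrow> j < q \<Longrightarrow>
     real (count_list (subst_iter \<sigma> k (m + j + 1)) (m + i + 1)) \<le> rho Bm ^ k * (c1 + c2 * real k ^ (q - 1))"
    using spec_bound[OF r1] by blast
  define E where "E = real q * (\<bar>c1\<bar> + \<bar>c2\<bar> + 1)"
  have E0: "E > 0" using m_lt by (simp add: E_def add_pos_nonneg)
  show ?thesis
  proof (intro exI[of _ E] conjI allI impI ballI E0)
    fix n :: nat and v assume n: "n \<ge> 1" and v: "v \<in> Bs"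
    obtain j where j: "j < q" "v = m + j + 1" using v by (intro that[of "v - m - 1"]) auto
    have npow: "real n ^ (q - 1) \<ge> 1" using n by simp
    have each: "real (count_list (subst_iter \<sigma> n v) i) \<le> rho Bm ^ n * ((\<bar>c1\<bar> + \<bar>c2\<bar> + 1) * real n ^ (q - 1))"
      if i: "i \<in> Bs" for i
    proof -
      obtain i0 where i0: "i0 < q" "i = m + i0 + 1" using i by (intro that[of "i - m - 1"]) auto
      have "real (count_list (subst_iter \<sigma> n v) i) \<le> rho Bm ^ n * (c1 + c2 * real n ^ (q - 1))"
        using cb[OF i0(1) j(1), of n] i0 j by simp
      also have "c1 + c2 * real n ^ (q - 1) \<le> (\<bar>c1\<bar> + \<bar>c2\<bar> + 1) * real n ^ (q - 1)"
      proof -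
        have "c1 \<le> \<bar>c1\<bar> * real n ^ (q - 1)" using npow
          by (metis abs_ge_self abs_ge_zero mult_cancel_left2 mult_left_mono order_trans)
        moreover have "c2 * real n ^ (q - 1) \<le> \<bar>c2\<bar> * real n ^ (q - 1)"
          using npow by (intro mult_right_mono) auto
        ultimately show ?thesis using npow by (simp add: algebra_simps)
      qed
      then have "rho Bm ^ n * (c1 + c2 * real n ^ (q - 1)) \<le> rho Bm ^ n * ((\<bar>c1\<bar> + \<bar>c2\<bar> + 1) * real n ^ (q - 1))"
        using r1 by (intro mult_left_mono) auto
      finally show ?thesis .
    qed
    have "real (sB n v) = (\<Sum>i\<in>Bs. real (count_list (subst_iter \<sigma> n v) i))"
      by (simp add: sB_def bcount_sum)
    also have "\<dots> \<le> (\<Sum>i\<in>Bs. rho Bm ^ n * ((\<bar>c1\<bar> + \<bar>c2\<bar> + 1) * real n ^ (q - 1)))"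
      by (intro sum_mono each)
    also have "\<dots> = rho Bm ^ n * E * real n ^ (q - 1)" by (simp add: E_def)
    finally show "real (sB n v) \<le> rho Bm ^ n * E * real n ^ (q - 1)" .
  qed
qed

lemma prim_p:
  assumes "primitive_mat Bm"
  shows "\<exists>p\<ge>1. \<forall>v\<in>Bs. \<forall>w\<in>Bs. w \<in> set (subst_iter \<sigma> p v)"
proof -
  obtain p where p: "p \<ge> 1" "\<And>i j. i < q \<Longrightarrow> j < q \<Longrightarrow> (Bm ^\<^sub>m p) $$ (i, j) > 0"
    using assms unfolding primitive_mat_def by auto
  have mid: "map_mat id Bm = Bm" by (rule eq_matI) auto
  show ?thesis
  proof (intro exI[of _ p] conjI p(1) ballI)
    fix v w assume v: "v \<in> Bs" and w: "w \<in> Bs"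
    obtain j where j: "j < q" "v = m + j + 1" using v by (intro that[of "v - m - 1"]) auto
    obtain i where i: "i < q" "w = m + i + 1" using w by (intro that[of "w - m - 1"]) auto
    have "count_list (subst_iter \<sigma> p v) w > 0"
      using p(2)[OF i(1) j(1)] block_pow[OF i(1) j(1), where 'a=nat, of p] i j by (simp add: mid)
    then show "w \<in> set (subst_iter \<sigma> p v)" by (metis count_list_0_iff less_irrefl)
  qed
qed

definition gB :: "nat \<Rightarrow> nat" where "gB k = Min (sB k ` Bs)"

lemma Bs_ne: "Bs \<noteq> {}" using m_lt by auto

lemma gB_le: "v \<in> Bs \<Longrightarrow> gB k \<le> sB k v"
  unfolding gB_def by (rule Min_le) auto

lemma gB_attained: "\<exists>v\<in>Bs. gB k = sB k v"
proof -
  have "gB k \<in> sB k ` Bs" unfolding gB_def using Bs_ne by (intro Min_in) auto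
  then show ?thesis by auto
qed

lemma sum_sB_ge: "bcount Bs w * gB k \<le> sum_list (map (sB k) w)"
  by (induction w) (auto simp: bcount_def gB_le add_mono)

lemma gB_mult: "gB j * gB k \<le> gB (j + k)"
proof -
  obtain v where v: "v \<in> Bs" "gB (j + k) = sB (j + k) v" using gB_attained by blast
  have "gB j * gB k \<le> sB j v * gB k" using gB_le[OF v(1)] by simp
  also have "\<dots> = bcount Bs (subst_iter \<sigma> j v) * gB k" by (simp add: sB_def)
  also have "\<dots> \<le> sum_list (map (sB k) (subst_iter \<sigma> j v))" by (rule sum_sB_ge)
  also have "\<dots> = gB (j + k)" using v(2) by (simp add: sB_add)
  finally show ?thesis .
qed

lemma gB_pow: "gB k ^ n \<le> gB (n * k)"
proof (induction n)
  case 0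
  obtain v where v: "v \<in> Bs" "gB 0 = sB 0 v" using gB_attained by blast
  then show ?case using sB_0 by simp
next
  case (Suc n)
  have "gB k ^ Suc n = gB k * gB k ^ n" by simp
  also have "\<dots> \<le> gB k * gB (n * k)" using Suc by simp
  also have "\<dots> \<le> gB (k + n * k)" by (rule gB_mult)
  finally show ?case by (simp add: add.commute)
qed

lemma gB_bound:
  assumes r1: "rho Bm > 1"
  shows "real (gB k) \<le> rho Bm ^ k"
proof (cases "k = 0")
  case True
  obtain v where v: "v \<in> Bs" "gB 0 = sB 0 v" using gB_attained by blast
  then show ?thesis using True sB_0 by simp
next
  case False
  obtain E where E: "E > 0" "\<And>n v. n \<ge> 1 \<Longrightarrow> v \<in> Bs \<Longrightarrow> real (sB n v) \<le> rho Bm ^ n * E * real n ^ (q - 1)"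
    using sB_poly[OF r1] by blast
  obtain v0 where v0: "v0 \<in> Bs" using Bs_ne by auto
  let ?r = "rho Bm"
  have r0: "?r > 0" using r1 by simp
  define x where "x = real (gB k) / ?r ^ k"
  have x0: "x \<ge> 0" using r0 by (simp add: x_def)
  have "x \<le> 1"
  proof (rule growth_le_1[OF x0, of "E * real k ^ (q - 1)" "q - 1"])
    show "0 < E * real k ^ (q - 1)" using E(1) False by simp
  next
    fix n :: nat assume n: "n \<ge> 1"
    have nk: "n * k \<ge> 1" using n False by simp
    have "x ^ n = real (gB k ^ n) / ?r ^ (n * k)" by (simp add: x_def power_divide power_mult mult.commute)
    also have "\<dots> \<le> real (gB (n * k)) / ?r ^ (n * k)"
      using gB_pow[of k n] r0 by (intro divide_right_mono) auto
    also have "\<dots> \<le> real (sB (n * k) v0) / ?r ^ (n * k)"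
      using gB_le[OF v0, of "n * k"] r0 by (intro divide_right_mono) auto
    also have "\<dots> \<le> (?r ^ (n * k) * E * real (n * k) ^ (q - 1)) / ?r ^ (n * k)"
      using E(2)[OF nk v0] r0 by (intro divide_right_mono) auto
    also have "\<dots> = E * real k ^ (q - 1) * real n ^ (q - 1)"
      using r0 by (simp add: power_mult_distrib)
    finally show "x ^ n \<le> E * real k ^ (q - 1) * real n ^ (q - 1)" .
  qed
  then show ?thesis using r0 by (simp add: x_def divide_le_eq)
qed

lemma sB_bound:
  assumes r1: "rho Bm > 1" and prim: "primitive_mat Bm"
  shows "\<exists>Cp>0. \<forall>k. \<forall>v\<in>{1..N}. real (sB k v) \<le> Cp * rho Bm ^ k"
proof -
  obtain p where p: "p \<ge> 1" "\<And>v w. v \<in> Bs \<Longrightarrow> w \<in> Bs \<Longrightarrow> w \<in> set (subst_iter \<sigma> p v)"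
    using prim_p[OF prim] by blast
  have r0: "rho Bm > 0" using r1 by simp
  show ?thesis
  proof (intro exI[of _ "rho Bm ^ p"] conjI allI ballI)
    show "rho Bm ^ p > 0" using r0 by simp
  next
    fix k v assume v: "v \<in> {1..N}"
    show "real (sB k v) \<le> rho Bm ^ p * rho Bm ^ k"
    proof (cases "v \<le> m")
      case True
      then have "sB k v = 0" using v by (intro sB_A) auto
      then show ?thesis using r0 by simp
    next
      case False
      then have vB: "v \<in> Bs" using v by auto
      obtain u where u: "u \<in> Bs" "gB (p + k) = sB (p + k) u" using gB_attained by blast
      have "sB k v \<le> sum_list (map (sB k) (subst_iter \<sigma> p u))"
        using p(2)[OF u(1) vB] by (intro member_le_sum_list) auto
      also have "\<dots> = gB (p + k)" using u(2) by (simp add: sB_add)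
      finally have "real (sB k v) \<le> real (gB (p + k))" by simp
      also have "\<dots> \<le> rho Bm ^ (p + k)" by (rule gB_bound[OF r1])
      finally show ?thesis by (simp add: power_add)
    qed
  qed
qed

end


context tsetup
begin

lemma cnt_k:
  assumes a: "a \<in> {1..N}" and k: "k \<le> n" and lohi: "lo \<le> hi"
    and Cp: "\<forall>k. \<forall>v\<in>{1..N}. real (sB k v) \<le> Cp * rho Bm ^ k" and Cp0: "Cp > 0"
    and \<delta>: "\<delta> > 0" "\<forall>v\<in>{1..N}. \<delta> \<le> \<xi> v" and r1: "rho Bm > 1"
  shows "real (cnt \<xi> Bs c (subst_iter \<sigma> n a) lo hi) \<le> Cp * rho Bm ^ k * ((hi - lo) / (lam ^ k * \<delta>) + 2)"
proof -
  have r0: "rho Bm \<ge> 0" using r1 by simp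
  have nk: "n = (n - k) + k" using k by simp
  have w: "subst_iter \<sigma> n a = concat (map (subst_iter \<sigma> k) (subst_iter \<sigma> (n - k) a))"
    by (subst nk, rule subst_iter_add)
  have D: "lam ^ k * \<delta> > 0" using lam_gt1 \<delta>(1) by simp
  have S0: "Cp * rho Bm ^ k \<ge> 0" using Cp0 r0 by simp
  have pieces: "\<forall>v\<in>set (subst_iter \<sigma> (n - k) a). wlen \<xi> (subst_iter \<sigma> k v) \<ge> lam ^ k * \<delta> \<and>
      real (bcount Bs (subst_iter \<sigma> k v)) \<le> Cp * rho Bm ^ k \<and> (\<forall>x\<in>set (subst_iter \<sigma> k v). \<xi> x \<ge> 0)"
  proof
    fix v assume "v \<in> set (subst_iter \<sigma> (n - k) a)"
    then have v: "v \<in> {1..N}" using letters[OF a] by blast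
    have "wlen \<xi> (subst_iter \<sigma> k v) = lam ^ k * \<xi> v" by (rule wlen_iter[OF v])
    moreover have "lam ^ k * \<delta> \<le> lam ^ k * \<xi> v" using \<delta>(2) v lam_gt1 by (intro mult_left_mono) auto
    moreover have "real (bcount Bs (subst_iter \<sigma> k v)) \<le> Cp * rho Bm ^ k" using Cp v by (simp add: sB_def)
    moreover have "\<forall>x\<in>set (subst_iter \<sigma> k v). \<xi> x \<ge> 0" using letters[OF v] xi_pos by fastforce
    ultimately show "wlen \<xi> (subst_iter \<sigma> k v) \<ge> lam ^ k * \<delta> \<and>
      real (bcount Bs (subst_iter \<sigma> k v)) \<le> Cp * rho Bm ^ k \<and> (\<forall>x\<in>set (subst_iter \<sigma> k v). \<xi> x \<ge> 0)" by simp
  qed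
  have "real (cnt \<xi> Bs c (subst_iter \<sigma> n a) lo hi) \<le> Cp * rho Bm ^ k * phi (lam ^ k * \<delta>) lo hi c"
    unfolding w by (rule window_bound[OF D lohi S0 pieces])
  also have "\<dots> \<le> Cp * rho Bm ^ k * ((hi - lo) / (lam ^ k * \<delta>) + 2)"
    by (intro mult_left_mono phi_le D lohi S0)
  finally show ?thesis .
qed

lemma cnt_all:
  assumes "a \<in> {1..N}" "\<forall>k. \<forall>v\<in>{1..N}. real (sB k v) \<le> Cp * rho Bm ^ k"
  shows "real (cnt \<xi> Bs c (subst_iter \<sigma> n a) lo hi) \<le> Cp * rho Bm ^ n"
proof -
  have "cnt \<xi> Bs c (subst_iter \<sigma> n a) lo hi \<le> sB n a" unfolding sB_def by (rule cnt_le_bcount)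
  then show ?thesis using assms by (meson of_nat_le_iff order_trans)
qed

lemma count_bound:
  assumes r1: "rho Bm > 1" and prim: "primitive_mat Bm" and rlt: "rho Bm < lam"
  shows "\<exists>K>0. \<forall>T\<in>tiling_space N \<sigma> \<xi> lam. \<forall>t>0.
           real (count_tiles \<xi> T Bs t) \<le> K * t powr (ln (rho Bm) / ln lam)"
proof -
  let ?r = "rho Bm"
  define \<alpha> where "\<alpha> = ln ?r / ln lam"
  obtain Cp where Cp0: "Cp > 0" and Cp: "\<forall>k. \<forall>v\<in>{1..N}. real (sB k v) \<le> Cp * ?r ^ k"
    using sB_bound[OF r1 prim] by blast
  define \<delta> where "\<delta> = Min (\<xi> ` {1..N})"
  have \<delta>0: "\<delta> > 0" using xi_pos m_lt unfolding \<delta>_def by (subst Min_gr_iff) auto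
  have \<delta>le: "\<forall>v\<in>{1..N}. \<delta> \<le> \<xi> v" unfolding \<delta>_def by auto
  have \<alpha>0: "\<alpha> > 0" using r1 rlt lam_gt1 by (simp add: \<alpha>_def)
  have lam_pow: "lam powr \<alpha> = ?r"
  proof -
    have "lam powr \<alpha> = exp (\<alpha> * ln lam)" using lam_gt1 by (simp add: powr_def)
    also have "\<alpha> * ln lam = ln ?r" using lam_gt1 by (simp add: \<alpha>_def)
    finally show ?thesis using r1 by simp
  qed
  have rk_le: "?r ^ k \<le> t powr \<alpha>" if "lam ^ k \<le> t" for k t
  proof -
    have "?r ^ k = (lam powr \<alpha>) powr real k" using lam_pow r1 by (simp add: powr_realpow)
    also have "\<dots> = (lam powr real k) powr \<alpha>" by (simp add: powr_powr mult.commute)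
    also have "\<dots> = (lam ^ k) powr \<alpha>" using lam_gt1 by (simp add: powr_realpow)
    also have "\<dots> \<le> t powr \<alpha>" using that \<alpha>0 lam_gt1 by (intro powr_mono2) auto
    finally show ?thesis .
  qed
  define K where "K = Cp * (lam / \<delta> + 2) + Cp * (1 / \<delta> + 2) / \<delta> powr \<alpha>"
  have K1: "Cp * (lam / \<delta> + 2) \<ge> 0" using Cp0 \<delta>0 lam_gt1 by simp
  have K2: "Cp * (1 / \<delta> + 2) / \<delta> powr \<alpha> \<ge> 0" using Cp0 \<delta>0 by simp
  have Kpos: "K > 0" using Cp0 \<delta>0 lam_gt1 K2 by (simp add: K_def add_pos_nonneg)
  show ?thesis unfolding \<alpha>_def[symmetric]
  proof (intro exI[of _ K] conjI Kpos ballI allI impI)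
    fix T t assume T: "T \<in> tiling_space N \<sigma> \<xi> lam" and t: "(t::real) > 0"
    define S where "S = {tt \<in> T. fst tt \<in> Bs \<and> tile_set \<xi> tt \<subseteq> {0..t}}"
    have ct: "count_tiles \<xi> T Bs t = card S" by (simp add: count_tiles_def S_def)
    have tpow0: "t powr \<alpha> \<ge> 0" by simp
    show "real (count_tiles \<xi> T Bs t) \<le> K * t powr \<alpha>"
    proof (cases "finite S \<and> \<delta> \<le> t")
      case False
      have "card S = 0"
      proof (cases "finite S")
        case True
        then have tl: "t < \<delta>" using False by auto
        have "S = {}"
        proof (rule ccontr)
          assume "S \<noteq> {}"
          then obtain b y where hb: "(b, y) \<in> T" "b \<in> Bs" "tile_set \<xi> (b, y) \<subseteq> {0..t}"
            unfolding S_def by auto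
          have "b \<in> {1..N}" using hb(2) by auto
          then have "\<delta> \<le> \<xi> b" using \<delta>le by auto
          then have "{y - \<xi> b / 2 .. y + \<xi> b / 2} \<subseteq> {0..t}" "y - \<xi> b / 2 \<le> y + \<xi> b / 2"
            using hb(3) \<delta>0 by (auto simp: tile_set_def)
          then have "\<xi> b \<le> t" by auto
          then show False using \<open>\<delta> \<le> \<xi> b\<close> tl by simp
        qed
        then show ?thesis by simp
      qed simp
      then show ?thesis using ct Kpos tpow0 by simp
    next
      case True
      then have fS: "finite S" and td: "\<delta> \<le> t" by auto
      have "S \<subseteq> T" "finite S" using fS unfolding S_def by auto
      then obtain n a u where a: "a \<in> {1..N}" and Su: "S \<subseteq> translate_patch u ((patch_subst \<sigma> \<xi> lam ^^ n) {(a, 0)})"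
        using T unfolding tiling_space_def by blast
      define c where "c = - (lam ^ n * \<xi> a / 2)"
      have Su': "S \<subseteq> translate_patch u (pp \<xi> c (subst_iter \<sigma> n a))"
        using Su patch_iter[OF a, of n] by (simp add: c_def)
      define Q where "Q = {tt \<in> pp \<xi> c (subst_iter \<sigma> n a). fst tt \<in> Bs \<and> tile_set \<xi> tt \<subseteq> {- u..t - u}}"
      have SQ: "S \<subseteq> (\<lambda>(a, x). (a, x + u)) ` Q"
      proof
        fix s assume s: "s \<in> S"
        then obtain b y where hb: "(b, y) \<in> pp \<xi> c (subst_iter \<sigma> n a)" "s = (b, y + u)"
          using Su' unfolding translate_patch_def by auto
        have b: "b \<in> Bs" "tile_set \<xi> (b, y + u) \<subseteq> {0..t}" using s hb(2) unfolding S_def by auto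
        have "b \<in> {1..N}" using b(1) by auto
        then have xb: "\<xi> b > 0" using xi_pos by auto
        have "tile_set \<xi> (b, y) \<subseteq> {- u..t - u}"
          using b(2) xb by (auto simp: tile_set_def)
        then have "(b, y) \<in> Q" using hb(1) b(1) by (simp add: Q_def)
        then show "s \<in> (\<lambda>(a, x). (a, x + u)) ` Q" using hb(2) by force
      qed
      have "card S \<le> card ((\<lambda>(a, x). (a, x + u)) ` Q)"
        by (rule card_mono[OF _ SQ]) (simp add: Q_def)
      also have "\<dots> \<le> card Q" by (rule card_image_le) (simp add: Q_def)
      also have "card Q = cnt \<xi> Bs c (subst_iter \<sigma> n a) (- u) (t - u)" by (simp add: Q_def cnt_def)
      finally have cS: "real (card S) \<le> real (cnt \<xi> Bs c (subst_iter \<sigma> n a) (- u) (t - u))" by simp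
      have lohi: "- u \<le> t - u" using t by simp
      have len: "t - u - (- u) = t" by simp
      have bound: "real (cnt \<xi> Bs c (subst_iter \<sigma> n a) (- u) (t - u)) \<le> K * t powr \<alpha>"
      proof (cases "t \<ge> 1")
        case True
        obtain n0 where n0: "t < lam ^ n0" using real_arch_pow[OF lam_gt1] by blast
        define k where "k = (LEAST k. t < lam ^ Suc k)"
        have n0': "n0 = Suc (n0 - 1)" using n0 True by (cases n0) auto
        have k1: "t < lam ^ Suc k" unfolding k_def by (rule LeastI[of _ "n0 - 1"]) (use n0 n0' in simp)
        have k2: "lam ^ k \<le> t"
        proof (cases k)
          case 0 then show ?thesis using True by simp
        next
          case (Suc k')
          have "\<not> t < lam ^ Suc k'" using not_less_Least[of k' "\<lambda>k. t < lam ^ Suc k"] Suc k_def by simp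
          then show ?thesis using Suc by simp
        qed
        have rk: "?r ^ k \<le> t powr \<alpha>" by (rule rk_le[OF k2])
        show ?thesis
        proof (cases "k \<le> n")
          case True
          have "real (cnt \<xi> Bs c (subst_iter \<sigma> n a) (- u) (t - u)) \<le> Cp * ?r ^ k * (t / (lam ^ k * \<delta>) + 2)"
            using cnt_k[OF a True lohi Cp Cp0 \<delta>0 \<delta>le r1] by (simp add: len)
          also have "t / (lam ^ k * \<delta>) \<le> lam / \<delta>"
          proof -
            have "t \<le> lam * lam ^ k" using k1 by simp
            then show ?thesis using \<delta>0 lam_gt1 by (simp add: field_simps)
          qed
          then have "Cp * ?r ^ k * (t / (lam ^ k * \<delta>) + 2) \<le> Cp * ?r ^ k * (lam / \<delta> + 2)"
            using Cp0 r1 by (intro mult_left_mono) auto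
          also have "\<dots> = Cp * (lam / \<delta> + 2) * ?r ^ k" by simp
          also have "\<dots> \<le> Cp * (lam / \<delta> + 2) * t powr \<alpha>" using rk K1 by (intro mult_left_mono) auto
          also have "\<dots> \<le> K * t powr \<alpha>"
          proof -
            have "0 \<le> Cp * (1 / \<delta> + 2) / \<delta> powr \<alpha> * t powr \<alpha>" by (rule mult_nonneg_nonneg[OF K2 tpow0])
            then show ?thesis unfolding K_def distrib_right by linarith
          qed
          finally show ?thesis by simp
        next
          case False
          have "real (cnt \<xi> Bs c (subst_iter \<sigma> n a) (- u) (t - u)) \<le> Cp * ?r ^ n"
            by (rule cnt_all[OF a Cp])
          also have "\<dots> \<le> Cp * ?r ^ k" using False r1 Cp0 by (intro mult_left_mono power_increasing) auto
          also have "\<dots> \<le> Cp * t powr \<alpha>" using rk Cp0 by (intro mult_left_mono) auto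
          also have "\<dots> \<le> Cp * (lam / \<delta> + 2) * t powr \<alpha>"
          proof -
            have "1 \<le> lam / \<delta> + 2" using lam_gt1 \<delta>0 by (simp add: add_increasing)
            then show ?thesis using Cp0 tpow0 by (simp add: mult_right_mono mult_left_mono)
          qed
          also have "\<dots> \<le> K * t powr \<alpha>"
          proof -
            have "0 \<le> Cp * (1 / \<delta> + 2) / \<delta> powr \<alpha> * t powr \<alpha>" by (rule mult_nonneg_nonneg[OF K2 tpow0])
            then show ?thesis unfolding K_def distrib_right by linarith
          qed
          finally show ?thesis .
        qed
      next
        case False
        have "real (cnt \<xi> Bs c (subst_iter \<sigma> n a) (- u) (t - u)) \<le> Cp * ?r ^ 0 * (t / (lam ^ 0 * \<delta>) + 2)"
          using cnt_k[OF a _ lohi Cp Cp0 \<delta>0 \<delta>le r1, of 0] by (simp add: len)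
        also have "\<dots> \<le> Cp * (1 / \<delta> + 2)"
          using False Cp0 \<delta>0 by (simp add: divide_right_mono)
        also have "\<dots> = Cp * (1 / \<delta> + 2) / \<delta> powr \<alpha> * \<delta> powr \<alpha>" using \<delta>0 by simp
        also have "\<dots> \<le> Cp * (1 / \<delta> + 2) / \<delta> powr \<alpha> * t powr \<alpha>"
          using td \<delta>0 \<alpha>0 K2 by (intro mult_left_mono powr_mono2) auto
        also have "\<dots> \<le> K * t powr \<alpha>"
        proof -
          have "0 \<le> Cp * (lam / \<delta> + 2) * t powr \<alpha>" using K1 tpow0 by simp
          then show ?thesis unfolding K_def by (simp add: distrib_right)
        qed
        finally show ?thesis .
      qed
      show ?thesis using ct cS bound by simp
    qed
  qed
qed

end


theorem mainTheorem10:
  fixes N m :: nat and \<sigma> :: "nat \<Rightarrow> nat list" and \<xi> :: "nat \<Rightarrow> real"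
  assumes m_pos: "1 \<le> m" and m_lt: "m < N"
    and subst: "\<forall>a\<in>{1..N}. \<sigma> a \<noteq> [] \<and> set (\<sigma> a) \<subseteq> {1..N}"
    and lower_zero: "\<forall>a\<in>{m+1..N}. \<forall>b\<in>{1..m}. count_list (\<sigma> b) a = 0"
    and C_nonzero: "\<exists>a\<in>{1..m}. \<exists>b\<in>{m+1..N}. count_list (\<sigma> b) a \<noteq> 0"
    and A_prim: "primitive_mat (subst_block \<sigma> 0 m 0 m)"
    and B_prim: "primitive_mat (subst_block \<sigma> m (N - m) m (N - m))"
    and rho_order: "rho (subst_block \<sigma> 0 m 0 m) > rho (subst_block \<sigma> m (N - m) m (N - m))"
    and rhoB_gt1: "rho (subst_block \<sigma> m (N - m) m (N - m)) > 1"
    and xi: "\<forall>i\<in>{1..N}. \<xi> i > 0 \<and>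
       (\<lambda>k. real (length (subst_iter \<sigma> k i)) / (\<xi> i * rho (subst_block \<sigma> 0 m 0 m) ^ k))
         \<longlonglongrightarrow> 1"
  shows "\<exists>K>0. \<forall>T\<in>tiling_space N \<sigma> \<xi> (rho (subst_block \<sigma> 0 m 0 m)). \<forall>t>0.
           real (count_tiles \<xi> T {m+1..N} t) \<le>
             K * t powr (ln (rho (subst_block \<sigma> m (N - m) m (N - m))) / ln (rho (subst_block \<sigma> 0 m 0 m)))"
proof -
  interpret tsetup N m \<sigma> \<xi> "rho (subst_block \<sigma> 0 m 0 m)"
  proof (unfold_locales)
    show "m < N" by (rule m_lt)
    show "\<forall>a\<in>{1..N}. \<sigma> a \<noteq> [] \<and> set (\<sigma> a) \<subseteq> {1..N}" by (rule subst)
    show "\<forall>a\<in>{m+1..N}. \<forall>b\<in>{1..m}. count_list (\<sigma> b) a = 0" by (rule lower_zero)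
    show "\<forall>i\<in>{1..N}. \<xi> i > 0" using xi by blast
    show "rho (subst_block \<sigma> 0 m 0 m) > 1" using rho_order rhoB_gt1 by linarith
    show "\<forall>i\<in>{1..N}. (\<lambda>k. real (length (subst_iter \<sigma> k i)) / (\<xi> i * rho (subst_block \<sigma> 0 m 0 m) ^ k)) \<longlonglongrightarrow> 1"
      using xi by blast
  qed
  show ?thesis using count_bound[OF rhoB_gt1 B_prim rho_order] by simp
qed

end
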